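(* Let $\alpha$ be a parameter. (i) Let $n_1>\dots>n_p\ge0$ and $m_1>\dots>m_q\ge0$ be integers, $r=p+q$, and $P(x)=e^{-qx}\mathrm{Wr}[L^{\alpha}_{n_1}(x),\dots,L^{\alpha}_{n_p}(x),e^xL^{\alpha}_{m_1}(-x),\dots,e^xL^{\alpha}_{m_q}(-x)]$. Let $s$ be the smallest positive integer with $n_i<r-1$ for all $i\ge s$ and $n_i\ge r-1$ for all $i<s$ ($s=p+1$ if none exists), and $s'$ the analogue for the $m_j$ ($s'=q+1$ if none exists). Then, up to sign, $$P(0)=\frac{\prod_{k=1}^{r}(\alpha+k)^{(r-k)}\prod_{i=1}^{s-1}(\alpha+r)^{(n_i-r+1)}\prod_{j=1}^{s'-1}(\alpha+r)^{(m_j-r+1)}\;\Delta(-n_p,\dots,-n_1,\alpha+1+m_1,\dots,\alpha+1+m_q)}{\prod_{i=s}^{p}(\alpha+1+n_i)^{(r-1-n_i)}\prod_{j=s'}^{q}(\alpha+1+m_j)^{(r-1-m_j)}\prod_{i=1}^{p}n_i!\prod_{j=1}^{q}m_j!}.$$ (ii) Let $n_1'>\dots>n_p'\ge0$ and $m_1'>\dots>m_q'\ge0$ be integers, $r=p+q$, and $Q(x)=e^{-px}x^{\alpha r}\mathrm{Wr}[x^{-\alpha}L^{-\alpha}_{m_1'}(x),\dots,x^{-\alpha}L^{-\alpha}_{m_q'}(x),e^xx^{-\alpha}L^{-\alpha}_{n_1'}(-x),\dots,e^xx^{-\alpha}L^{-\alpha}_{n_p'}(-x)]$. Let $\mathbf{s}$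 be the smallest positive integer with $n_i'<r-1$ for $i\ge\mathbf{s}$ and $n_i'\ge r-1$ for $i<\mathbf{s}$ ($\mathbf{s}=p+1$ if none exists), and $\mathbf{s}'$ the analogue for the $m_j'$ ($\mathbf{s}'=q+1$ if none exists). Then, up to sign, $$Q(0)=\frac{\prod_{k=1}^{r}(-\alpha+k)^{(r-k)}\prod_{j=1}^{\mathbf{s}'-1}(-\alpha+r)^{(m_j'-r+1)}\prod_{i=1}^{\mathbf{s}-1}(-\alpha+r)^{(n_i'-r+1)}\;\Delta(-m_q',\dots,-m_1',-\alpha+1+n_1',\dots,-\alpha+1+n_p')}{\prod_{j=\mathbf{s}'}^{q}(-\alpha+1+m_j')^{(r-1-m_j')}\prod_{i=\mathbf{s}}^{p}(-\alpha+1+n_i')^{(r-1-n_i')}\prod_{j=1}^{q}m_j'!\prod_{i=1}^{p}n_i'!}.$$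
   Context: $L_n^{\beta}$ is the classical Laguerre polynomial; $\mathrm{Wr}$ is the Wronskian; rising factorial $a^{(n)}=a(a+1)\cdots(a+n-1)$, $a^{(0)}=1$; Vandermonde $\Delta(a_1,\dots,a_k)=\prod_{i<j}(a_j-a_i)$. In the paper's notation $P=\Omega^{\alpha}_{\mu,\nu}$ is the generalized Laguerre polynomial for the canonical Maya diagrams $(\emptyset|n_1,\dots,n_p)$, $(\emptyset|m_1,\dots,m_q)$, and $Q=\Omega^{\alpha}_{\mu',\nu'}$ the one for the conjugate canonical diagrams $(n_1',\dots,n_p'|\emptyset)$, $(m_1',\dots,m_q'|\emptyset)$; $Q(0)$ means the value at $0$ of this polynomial. The paper ignores overall factors $(-1)^d$. *)

theory Defs
  imports "HOL-Analysis.Analysis" "Jordan_Normal_Form.Determinant"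
begin

definition laguerre :: "nat \<Rightarrow> real \<Rightarrow> real \<Rightarrow> real" where
  "laguerre n \<beta> x = (\<Sum>k\<le>n. ((of_nat n + \<beta>) gchoose (n - k)) * (- x) ^ k / fact k)"

definition wronskian :: "(real \<Rightarrow> real) list \<Rightarrow> real \<Rightarrow> real" where
  "wronskian fs x = Determinant.det (mat (length fs) (length fs) (\<lambda>(i, j). (deriv ^^ i) (fs ! j) x))"

definition vandermonde :: "real list \<Rightarrow> real" where
  "vandermonde as = (\<Prod>j<length as. \<Prod>i<j. as ! j - as ! i)"

definition split_index :: "nat list \<Rightarrow> int \<Rightarrow> nat" where
  "split_index ns t = (LEAST s. 1 \<le> s \<and>
      (\<forall>i\<in>{1..length ns}. (s \<le> i \<longrightarrow> int (ns ! (i - 1)) < t) \<and>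
                            (i < s \<longrightarrow> int (ns ! (i - 1)) \<ge> t)))"

definition laguerre_P :: "real \<Rightarrow> nat list \<Rightarrow> nat list \<Rightarrow> real \<Rightarrow> real" where
  "laguerre_P \<alpha> ns ms x = exp (- real (length ms) * x) *
     wronskian (map (\<lambda>n y. laguerre n \<alpha> y) ns @ map (\<lambda>m y. exp y * laguerre m \<alpha> (- y)) ms) x"

text \<open>Q(x) = e^{-px} x^{alpha r} Wr[x^{-alpha} L^{-alpha}_{m'_j}(x) .., e^x x^{-alpha} L^{-alpha}_{n'_i}(-x) ..],
  meaningful for x > 0; here ns = n', ms = m', p = length ns.\<close>
definition laguerre_Q :: "real \<Rightarrow> nat list \<Rightarrow> nat list \<Rightarrow> real \<Rightarrow> real" where
  "laguerre_Q \<alpha> ns ms x = exp (- real (length ns) * x) * x powr (\<alpha> * real (length ns + length ms)) *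
     wronskian (map (\<lambda>m y. y powr (- \<alpha>) * laguerre m (- \<alpha>) y) ms @
                map (\<lambda>n y. exp y * y powr (- \<alpha>) * laguerre n (- \<alpha>) (- y)) ns) x"

end

theory Submission
  imports Defs
begin

lemma det_scale:
  fixes N :: "nat \<Rightarrow> nat \<Rightarrow> 'a::comm_ring_1"
  shows "det (mat n n (\<lambda>(i,j). a i * b j * N i j)) =
         (\<Prod>i<n. a i) * (\<Prod>j<n. b j) * det (mat n n (\<lambda>(i,j). N i j))"
proof -
  have c1: "mat n n (\<lambda>(i,j). a i * b j * N i j) \<in> carrier_mat n n" by simp
  have c2: "mat n n (\<lambda>(i,j). N i j) \<in> carrier_mat n n" by simp
  have "\<And>p. p permutes {0..<n} \<Longrightarrow>
     signof p * (\<Prod>i = 0..<n. mat n n (\<lambda>(i,j). a i * b j * N i j) $$ (i, p i)) =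
     (\<Prod>i<n. a i) * (\<Prod>j<n. b j) * (signof p * (\<Prod>i = 0..<n. mat n n (\<lambda>(i,j). N i j) $$ (i, p i)))"
  proof -
    fix p assume p: "p permutes {0..<n}"
    have pi: "i < n \<Longrightarrow> p i < n" for i using permutes_in_image[OF p] by auto
    have "(\<Prod>i = 0..<n. mat n n (\<lambda>(i,j). a i * b j * N i j) $$ (i, p i)) =
          (\<Prod>i = 0..<n. a i * b (p i) * N i (p i))"
      by (rule prod.cong) (auto simp: pi)
    also have "\<dots> = (\<Prod>i = 0..<n. a i) * (\<Prod>i = 0..<n. b (p i)) * (\<Prod>i = 0..<n. N i (p i))"
      by (simp add: prod.distrib)
    also have "(\<Prod>i = 0..<n. b (p i)) = (\<Prod>i = 0..<n. b i)"
      using prod.permute[OF p, of b] by (simp add: comp_def)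
    also have "(\<Prod>i = 0..<n. N i (p i)) = (\<Prod>i = 0..<n. mat n n (\<lambda>(i,j). N i j) $$ (i, p i))"
      by (rule prod.cong) (auto simp: pi)
    finally show "signof p * (\<Prod>i = 0..<n. mat n n (\<lambda>(i,j). a i * b j * N i j) $$ (i, p i)) =
     (\<Prod>i<n. a i) * (\<Prod>j<n. b j) * (signof p * (\<Prod>i = 0..<n. mat n n (\<lambda>(i,j). N i j) $$ (i, p i)))"
      by (simp add: atLeast0LessThan algebra_simps)
  qed
  then show ?thesis
    unfolding det_def'[OF c1] det_def'[OF c2] sum_distrib_left
    by (intro sum.cong) auto
qed

lemma vdm_prod_Suc:
  fixes x :: "nat \<Rightarrow> real"
  shows "(\<Prod>j<Suc n. \<Prod>i<j. x j - x i) =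
    (\<Prod>j<n. x (Suc j) - x 0) * (\<Prod>j<n. \<Prod>i<j. x (Suc j) - x (Suc i))"
  by (simp add: prod.lessThan_Suc_shift prod.distrib del: prod.lessThan_Suc)

lemma vdm_det:
  fixes x :: "nat \<Rightarrow> real"
  shows "det (mat n n (\<lambda>(i,j). pochhammer (x j) i)) = (\<Prod>j<n. \<Prod>i<j. x j - x i)"
proof (induction n arbitrary: x)
  case 0
  then show ?case by (simp add: det_def')
next
  case (Suc n)
  define M where "M = mat (Suc n) (Suc n) (\<lambda>(i,j). pochhammer (x j) i)"
  define L :: "real mat" where "L = mat (Suc n) (Suc n) (\<lambda>(i,k). if k = i then 1 else if Suc k = i then -(x 0 + of_nat k) else 0)"
  define N where "N = mat (Suc n) (Suc n) (\<lambda>(i,j). if i = 0 then 1 else (x j - x 0) * pochhammer (x j) (i - 1))"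
  have LM: "L * M = N"
  proof (rule eq_matI)
    fix i j assume i: "i < dim_row N" and j: "j < dim_col N"
    hence i': "i < Suc n" and j': "j < Suc n" by (auto simp: N_def)
    have "(L * M) $$ (i, j) = (\<Sum>k<Suc n. L $$ (i,k) * M $$ (k,j))"
      using i' j' by (simp add: L_def M_def scalar_prod_def atLeast0LessThan)
    also have "\<dots> = (\<Sum>k<Suc n. (if k = i then M $$ (k,j) else 0) + (if Suc k = i then -(x 0 + of_nat k) * M $$ (k,j) else 0))"
      using i' by (intro sum.cong refl) (auto simp: L_def)
    also have "\<dots> = M $$ (i,j) + (if i = 0 then 0 else -(x 0 + of_nat (i-1)) * M $$ (i-1,j))"
    proof -
      have a: "(\<Sum>k<Suc n. (if k = i then M $$ (k,j) else 0)) = M $$ (i,j)"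
        using i' by (simp add: sum.delta)
      have b: "(\<Sum>k<Suc n. (if Suc k = i then -(x 0 + of_nat k) * M $$ (k,j) else 0)) =
           (if i = 0 then 0 else -(x 0 + of_nat (i-1)) * M $$ (i-1,j))"
      proof (cases i)
        case 0 then show ?thesis by simp
      next
        case (Suc i0)
        have "(\<Sum>k<Suc n. (if Suc k = i then -(x 0 + of_nat k) * M $$ (k,j) else 0)) =
              (\<Sum>k<Suc n. (if k = i0 then -(x 0 + of_nat k) * M $$ (k,j) else 0))"
          by (rule sum.cong) (auto simp: Suc)
        also have "\<dots> = -(x 0 + of_nat i0) * M $$ (i0,j)" using i' Suc by (simp add: sum.delta)
        finally show ?thesis using Suc by simp
      qed
      show ?thesis by (simp only: sum.distrib a b)
    qed
    also have "\<dots> = N $$ (i,j)"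
    proof (cases i)
      case 0 then show ?thesis using j' by (simp add: M_def N_def)
    next
      case (Suc i0)
      then show ?thesis using i' j' by (simp add: M_def N_def pochhammer_rec' algebra_simps)
    qed
    finally show "(L * M) $$ (i, j) = N $$ (i, j)" .
  qed (auto simp: L_def N_def M_def)
  have detL: "det L = 1"
  proof -
    have "det L = prod_list (diag_mat L)"
      by (rule det_lower_triangular[where n="Suc n"]) (auto simp: L_def)
    also have "diag_mat L = map (\<lambda>i. 1) [0..<Suc n]"
      unfolding diag_mat_def by (intro map_cong) (auto simp: L_def simp del: upt_Suc)
    finally show ?thesis by (simp add: map_replicate_const del: upt_Suc)
  qed
  have "det M = det N"
    using det_mult[of L "Suc n" M] LM detL by (simp add: L_def M_def)
  also have "det N = (\<Sum>i<Suc n. N $$ (i,0) * cofactor N i 0)"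
    by (rule laplace_expansion_column) (auto simp: N_def)
  also have "\<dots> = cofactor N 0 0"
  proof -
    have "(\<Sum>i<Suc n. N $$ (i,0) * cofactor N i 0) = (\<Sum>i<Suc n. if i = 0 then cofactor N i 0 else 0)"
      by (intro sum.cong refl) (auto simp: N_def)
    also have "\<dots> = cofactor N 0 0" by (simp add: sum.delta)
    finally show ?thesis .
  qed
  also have "\<dots> = det (mat n n (\<lambda>(i,j). 1 * (x (Suc j) - x 0) * pochhammer (x (Suc j)) i))"
    unfolding cofactor_def mat_delete_def
    by (simp add: N_def, intro arg_cong[where f=det] eq_matI) auto
  also have "\<dots> = (\<Prod>j<n. x (Suc j) - x 0) * (\<Prod>j<n. \<Prod>i<j. x (Suc j) - x (Suc i))"
    using det_scale[where a="\<lambda>_. 1" and b="\<lambda>j. x (Suc j) - x 0" and N="\<lambda>i j. pochhammer (x (Suc j)) i" and n=n]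
      Suc.IH[of "\<lambda>j. x (Suc j)"] by simp
  finally show ?case unfolding M_def vdm_prod_Suc .
qed

lemma vandermonde_det:
  "vandermonde xs = det (mat (length xs) (length xs) (\<lambda>(i,j). pochhammer (xs ! j) i))"
  unfolding vandermonde_def by (simp add: vdm_det)

lemma lag0: "laguerre 0 \<beta> y = 1" by (simp add: laguerre_def)

lemma lag_at0: "laguerre n \<beta> 0 = (of_nat n + \<beta>) gchoose n"
proof -
  have "laguerre n \<beta> 0 = (\<Sum>k\<le>n. if k = 0 then (of_nat n + \<beta>) gchoose n else 0)"
    unfolding laguerre_def by (intro sum.cong refl) auto
  also have "\<dots> = (of_nat n + \<beta>) gchoose n" by (simp add: sum.delta)
  finally show ?thesis .
qed

lemma lag_deriv:
  "((\<lambda>y. laguerre (Suc n) \<beta> y) has_real_derivative - laguerre n (\<beta>+1) y) (at y)"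
proof -
  define a where "a k = (of_nat (Suc n) + \<beta>) gchoose (Suc n - k)" for k
  have L: "laguerre (Suc n) \<beta> = (\<lambda>y. \<Sum>k\<le>Suc n. a k * (- y) ^ k / fact k)"
    by (auto simp: laguerre_def a_def fun_eq_iff)
  have d: "((\<lambda>y. \<Sum>k\<le>Suc n. a k * (- y) ^ k / fact k) has_real_derivative
        (\<Sum>k\<le>Suc n. a k * (real k * (- y) ^ (k - 1) * (-1)) / fact k)) (at y)"
  proof (rule DERIV_sum)
    fix k
    have p: "((\<lambda>y. (- y) ^ k) has_real_derivative real k * (- y) ^ (k - 1) * (-1)) (at y)"
      using DERIV_power[OF DERIV_minus[OF DERIV_ident], of k y] by simp
    show "((\<lambda>y. a k * (- y) ^ k / fact k) has_real_derivative a k * (real k * (- y) ^ (k - 1) * (-1)) / fact k) (at y)"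
      using DERIV_cdivide[OF DERIV_cmult[OF p, of "a k"], of "fact k"] by (simp add: mult.assoc)
  qed
  have "(\<Sum>k\<le>Suc n. a k * (real k * (- y) ^ (k - 1) * (-1)) / fact k) =
        (\<Sum>k\<le>n. a (Suc k) * (real (Suc k) * (- y) ^ k * (-1)) / fact (Suc k))"
    by (subst sum.atMost_Suc_shift) simp
  also have "\<dots> = (\<Sum>k\<le>n. - (((of_nat n + (\<beta>+1)) gchoose (n - k)) * (- y) ^ k / fact k))"
  proof (intro sum.cong refl)
    fix k assume "k \<in> {..n}"
    have "a (Suc k) = (of_nat n + (\<beta>+1)) gchoose (n - k)"
      by (simp add: a_def algebra_simps)
    then show "a (Suc k) * (real (Suc k) * (- y) ^ k * (-1)) / fact (Suc k) =
      - (((of_nat n + (\<beta>+1)) gchoose (n - k)) * (- y) ^ k / fact k)"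
      by (simp add: field_simps del: of_nat_Suc)
  qed
  also have "\<dots> = - laguerre n (\<beta>+1) y"
    by (simp add: laguerre_def sum_negf)
  finally show ?thesis using d L by simp
qed

lemma lag_shift: "laguerre (Suc m) (\<beta>+1) x = laguerre (Suc m) \<beta> x + laguerre m (\<beta>+1) x"
proof -
  have "laguerre (Suc m) (\<beta>+1) x = (\<Sum>k\<le>Suc m. ((of_nat (Suc m) + (\<beta>+1)) gchoose (Suc m - k)) * (- x) ^ k / fact k)"
    by (simp add: laguerre_def)
  also have "\<dots> = (\<Sum>k\<le>Suc m. ((of_nat (Suc m) + \<beta>) gchoose (Suc m - k)) * (- x) ^ k / fact k)
      + (\<Sum>k\<le>Suc m. (if k \<le> m then ((of_nat m + (\<beta>+1)) gchoose (m - k)) else 0) * (- x) ^ k / fact k)"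
    unfolding sum.distrib[symmetric]
  proof (intro sum.cong refl)
    fix k assume k: "k \<in> {..Suc m}"
    show "((of_nat (Suc m) + (\<beta>+1)) gchoose (Suc m - k)) * (- x) ^ k / fact k =
      ((of_nat (Suc m) + \<beta>) gchoose (Suc m - k)) * (- x) ^ k / fact k +
      (if k \<le> m then ((of_nat m + (\<beta>+1)) gchoose (m - k)) else 0) * (- x) ^ k / fact k"
    proof (cases "k \<le> m")
      case True
      then have e: "Suc m - k = Suc (m - k)" by simp
      define A :: real where "A = of_nat (Suc m) + \<beta>"
      have h1: "of_nat (Suc m) + (\<beta>+1) = A + 1" and h2: "of_nat m + (\<beta>+1) = A"
        by (simp_all add: A_def)
      show ?thesis unfolding h1 h2 A_def[symmetric] e if_P[OF True] gbinomial_Suc_Suc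
        by (simp add: add_divide_distrib distrib_right)
    next
      case False
      then have "k = Suc m" using k by auto
      then show ?thesis by simp
    qed
  qed
  also have "(\<Sum>k\<le>Suc m. (if k \<le> m then ((of_nat m + (\<beta>+1)) gchoose (m - k)) else 0) * (- x) ^ k / fact k)
     = laguerre m (\<beta>+1) x"
    by (simp add: laguerre_def)
  finally show ?thesis by (simp add: laguerre_def)
qed

lemma lagB_deriv:
  "((\<lambda>y. exp y * laguerre m \<beta> (- y)) has_real_derivative exp y * laguerre m (\<beta>+1) (- y)) (at y)"
proof (cases m)
  case 0
  then show ?thesis by (simp add: lag0 DERIV_exp)
next
  case (Suc m0)
  have d1: "((\<lambda>y. laguerre (Suc m0) \<beta> (- y)) has_real_derivative laguerre m0 (\<beta>+1) (- y)) (at y)"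
  proof -
    have "((\<lambda>y. laguerre (Suc m0) \<beta> (- y)) has_real_derivative (- laguerre m0 (\<beta>+1) (- y)) * (- 1)) (at y)"
      by (rule DERIV_chain2[where g="\<lambda>x. - x", OF lag_deriv]) (rule derivative_eq_intros refl)+
    then show ?thesis by simp
  qed
  have "((\<lambda>y. exp y * laguerre m \<beta> (- y)) has_real_derivative
       exp y * laguerre m \<beta> (- y) + exp y * laguerre m0 (\<beta>+1) (- y)) (at y)"
    unfolding Suc by (rule derivative_eq_intros d1 refl)+ simp
  then show ?thesis using lag_shift[of m0 \<beta> "- y"] Suc by (simp add: algebra_simps)
qed

lemma iter_deriv_lagA:
  "(deriv ^^ i) (\<lambda>y. laguerre n \<beta> y) =
     (\<lambda>y. if i \<le> n then (-1) ^ i * laguerre (n - i) (\<beta> + of_nat i) y else 0)"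
proof (induction i)
  case 0
  then show ?case by simp
next
  case (Suc i)
  have "(deriv ^^ Suc i) (\<lambda>y. laguerre n \<beta> y) =
     deriv (\<lambda>y. if i \<le> n then (-1) ^ i * laguerre (n - i) (\<beta> + of_nat i) y else 0)"
    using Suc by simp
  also have "\<dots> = (\<lambda>y. if Suc i \<le> n then (-1) ^ Suc i * laguerre (n - Suc i) (\<beta> + of_nat (Suc i)) y else 0)"
  proof (rule ext)
    fix y
    show "deriv (\<lambda>y. if i \<le> n then (-1) ^ i * laguerre (n - i) (\<beta> + of_nat i) y else 0) y =
      (if Suc i \<le> n then (-1) ^ Suc i * laguerre (n - Suc i) (\<beta> + of_nat (Suc i)) y else 0)"
    proof (cases "Suc i \<le> n")
      case True
      then have e: "n - i = Suc (n - Suc i)" by simp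
      have "((\<lambda>y. (-1) ^ i * laguerre (Suc (n - Suc i)) (\<beta> + of_nat i) y) has_real_derivative
             (-1) ^ i * (- laguerre (n - Suc i) (\<beta> + of_nat i + 1) y)) (at y)"
        by (rule DERIV_cmult[OF lag_deriv])
      then show ?thesis using True unfolding e
        by (intro DERIV_imp_deriv) (simp add: algebra_simps)
    next
      case False
      show ?thesis
      proof (cases "i = n")
        case True
        then show ?thesis using False by (simp add: lag0)
      next
        case False
        then show ?thesis using \<open>\<not> Suc i \<le> n\<close> by simp
      qed
    qed
  qed
  finally show ?case .
qed

lemma iter_deriv_lagB:
  "(deriv ^^ i) (\<lambda>y. exp y * laguerre m \<beta> (- y)) = (\<lambda>y. exp y * laguerre m (\<beta> + of_nat i) (- y))"
proof (induction i)
  case 0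
  then show ?case by simp
next
  case (Suc i)
  show ?case
    using Suc lagB_deriv[of m "\<beta> + of_nat i"]
    by (auto intro!: ext DERIV_imp_deriv simp: algebra_simps)
qed

lemma poch_split: "pochhammer (z::real) (k + l) = pochhammer z k * pochhammer (z + of_nat k) l"
  by (rule pochhammer_product')

lemma fact_poch: "i \<le> n \<Longrightarrow> fact n = fact (n - i) * pochhammer (of_nat (n - i) + 1 :: real) i"
  using poch_split[of 1 "n - i" i] by (simp add: pochhammer_fact add.commute)

lemma poch_neg_nat:
  "pochhammer (- real n) i = (if i \<le> n then (-1) ^ i * fact n / fact (n - i) else 0)"
proof (cases "i \<le> n")
  case True
  have "pochhammer (- real n) i = (-1) ^ i * pochhammer (real n - of_nat i + 1) i"
    by (rule pochhammer_minus)
  also have "real n - of_nat i + 1 = of_nat (n - i) + 1" using True by (simp add: of_nat_diff)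
  finally show ?thesis using True fact_poch[OF True] by simp
next
  case False
  then show ?thesis using pochhammer_of_nat_eq_0_iff[of n i, where 'a=real] by simp
qed

definition Kf :: "real \<Rightarrow> nat \<Rightarrow> nat \<Rightarrow> real" where
  "Kf a R c = (if R \<le> c then pochhammer (a + 1 + of_nat R) (c - R) else 1 / pochhammer (a + 1 + of_nat c) (R - c))"

lemma Kf_A:
  assumes "i \<le> n" "i \<le> R" and nz: "n < R \<Longrightarrow> pochhammer (a + 1 + of_nat n) (R - n) \<noteq> 0"
  shows "pochhammer (a + 1 + of_nat i) (n - i) = pochhammer (a + 1 + of_nat i) (R - i) * Kf a R n"
proof (cases "R \<le> n")
  case True
  have "pochhammer (a + 1 + of_nat i) ((R - i) + (n - R)) =
        pochhammer (a + 1 + of_nat i) (R - i) * pochhammer (a + 1 + of_nat i + of_nat (R - i)) (n - R)"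
    by (rule poch_split)
  moreover have "(R - i) + (n - R) = n - i" using True assms by simp
  moreover have "a + 1 + of_nat i + of_nat (R - i) = a + 1 + of_nat R" using assms by (simp add: of_nat_diff)
  ultimately show ?thesis using True by (simp add: Kf_def ac_simps)
next
  case False
  have "pochhammer (a + 1 + of_nat i) ((n - i) + (R - n)) =
        pochhammer (a + 1 + of_nat i) (n - i) * pochhammer (a + 1 + of_nat i + of_nat (n - i)) (R - n)"
    by (rule poch_split)
  moreover have "(n - i) + (R - n) = R - i" using False assms by simp
  moreover have "a + 1 + of_nat i + of_nat (n - i) = a + 1 + of_nat n" using assms by (simp add: of_nat_diff)
  ultimately show ?thesis using False nz by (simp add: Kf_def ac_simps)
qed

lemma Kf_B:
  assumes "i \<le> R" and nz: "m < R \<Longrightarrow> pochhammer (a + 1 + of_nat m) (R - m) \<noteq> 0"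
  shows "pochhammer (a + 1 + of_nat i) m =
     pochhammer (a + 1 + of_nat i) (R - i) * Kf a R m * pochhammer (a + 1 + of_nat m) i"
proof (cases "R \<le> m")
  case True
  have s1: "pochhammer (a + 1 + of_nat i) ((R - i) + (m - R) + i) =
        pochhammer (a + 1 + of_nat i) ((R - i) + (m - R)) * pochhammer (a + 1 + of_nat i + of_nat ((R - i) + (m - R))) i"
    by (rule poch_split)
  have s2: "pochhammer (a + 1 + of_nat i) ((R - i) + (m - R)) =
        pochhammer (a + 1 + of_nat i) (R - i) * pochhammer (a + 1 + of_nat i + of_nat (R - i)) (m - R)"
    by (rule poch_split)
  have e1: "(R - i) + (m - R) + i = m" using True assms by simp
  have e2: "a + 1 + of_nat i + of_nat (R - i) = a + 1 + of_nat R" using assms by (simp add: of_nat_diff)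
  have e3: "a + 1 + of_nat i + of_nat ((R - i) + (m - R)) = a + 1 + of_nat m" using True assms by (simp add: of_nat_diff)
  show ?thesis using True s1 s2 unfolding e1 e2 e3 by (simp add: Kf_def)
next
  case False
  have key: "pochhammer (a + 1 + of_nat i) m * pochhammer (a + 1 + of_nat m) (R - m) =
             pochhammer (a + 1 + of_nat i) (R - i) * pochhammer (a + 1 + of_nat m) i"
  proof (cases "m + i \<le> R")
    case True
    have e1: "pochhammer (a + 1 + of_nat m) (i + (R - m - i)) =
       pochhammer (a + 1 + of_nat m) i * pochhammer (a + 1 + of_nat m + of_nat i) (R - m - i)"
      by (rule poch_split)
    have e2: "pochhammer (a + 1 + of_nat i) (m + (R - m - i)) =
       pochhammer (a + 1 + of_nat i) m * pochhammer (a + 1 + of_nat i + of_nat m) (R - m - i)"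
      by (rule poch_split)
    have "i + (R - m - i) = R - m" "m + (R - m - i) = R - i" using True by simp_all
    with e1 e2 show ?thesis by (simp add: algebra_simps)
  next
    case False2: False
    have e1: "pochhammer (a + 1 + of_nat m) ((R - m) + (m + i - R)) =
       pochhammer (a + 1 + of_nat m) (R - m) * pochhammer (a + 1 + of_nat m + of_nat (R - m)) (m + i - R)"
      by (rule poch_split)
    have e2: "pochhammer (a + 1 + of_nat i) ((R - i) + (m + i - R)) =
       pochhammer (a + 1 + of_nat i) (R - i) * pochhammer (a + 1 + of_nat i + of_nat (R - i)) (m + i - R)"
      by (rule poch_split)
    have "(R - m) + (m + i - R) = i" "(R - i) + (m + i - R) = m" using False2 False assms by simp_all
    moreover have "a + 1 + of_nat m + of_nat (R - m) = a + 1 + of_nat R"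
       "a + 1 + of_nat i + of_nat (R - i) = a + 1 + of_nat R" using False assms by (simp_all add: of_nat_diff)
    ultimately show ?thesis using e1 e2 by (simp add: algebra_simps)
  qed
  show ?thesis using False nz key by (simp add: Kf_def field_simps)
qed

lemma sorted_gt_nth: "sorted_wrt (>) ns \<Longrightarrow> i < j \<Longrightarrow> j < length ns \<Longrightarrow> ns ! j < ns ! i"
  by (simp add: sorted_wrt_iff_nth_less)

lemma split_index_prop:
  assumes srt: "sorted_wrt (>) ns"
  shows "1 \<le> split_index ns t \<and> split_index ns t \<le> length ns + 1 \<and>
         (\<forall>i\<in>{1..length ns}. (i < split_index ns t \<longleftrightarrow> t \<le> int (ns ! (i - 1))))"
proof -
  define P where "P s = (1 \<le> s \<and>
      (\<forall>i\<in>{1..length ns}. (s \<le> i \<longrightarrow> int (ns ! (i - 1)) < t) \<and>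
                            (i < s \<longrightarrow> int (ns ! (i - 1)) \<ge> t)))" for s
  define A where "A = {i \<in> {1..length ns}. int (ns ! (i - 1)) < t}"
  define s0 where "s0 = (if A = {} then length ns + 1 else Min A)"
  have fA: "finite A" by (simp add: A_def)
  have s0le: "s0 \<le> length ns + 1"
    using fA by (auto simp: s0_def A_def intro: order.trans[OF Min_le])
  have Ps0: "P s0"
    unfolding P_def
  proof (intro conjI ballI)
    show "1 \<le> s0" using fA by (auto simp: s0_def A_def)
  next
    fix i assume i: "i \<in> {1..length ns}"
    show "s0 \<le> i \<longrightarrow> int (ns ! (i - 1)) < t"
    proof
      assume "s0 \<le> i"
      then have ne: "A \<noteq> {}" using i by (auto simp: s0_def split: if_splits)
      then have m: "Min A \<in> A" using fA by simp
      have "s0 = Min A" using ne by (simp add: s0_def)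
      have "ns ! (i - 1) \<le> ns ! (Min A - 1)"
      proof (cases "Min A = i")
        case True then show ?thesis by simp
      next
        case False
        have "Min A \<le> i" "1 \<le> Min A" using \<open>s0 \<le> i\<close> \<open>s0 = Min A\<close> m by (auto simp: A_def)
        then have "Min A - 1 < i - 1" using False by linarith
        moreover have "i - 1 < length ns" using i by auto
        ultimately show ?thesis using sorted_gt_nth[OF srt, of "Min A - 1" "i - 1"] by simp
      qed
      then show "int (ns ! (i - 1)) < t" using m by (auto simp: A_def)
    qed
    show "i < s0 \<longrightarrow> int (ns ! (i - 1)) \<ge> t"
    proof
      assume "i < s0"
      have "i \<notin> A"
      proof
        assume "i \<in> A"
        then have "Min A \<le> i" using fA by simp
        moreover have "A \<noteq> {}" using \<open>i \<in> A\<close> by auto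
        ultimately show False using \<open>i < s0\<close> by (simp add: s0_def)
      qed
      then show "int (ns ! (i - 1)) \<ge> t" using i by (auto simp: A_def)
    qed
  qed
  have PL: "P (split_index ns t)"
    unfolding split_index_def P_def[symmetric] using Ps0 by (rule LeastI)
  have "split_index ns t \<le> s0"
    unfolding split_index_def P_def[symmetric] using Ps0 by (rule Least_le)
  then show ?thesis using PL s0le unfolding P_def by auto
qed

lemma prod_shift1: "(\<Prod>i = 1..(p::nat). g (i - 1)) = (\<Prod>j<p. (g j :: real))"
  by (induction p) (simp_all add: prod.cl_ivl_Suc)

lemma prod_Kf_split:
  assumes srt: "sorted_wrt (>) ns" and len: "length ns \<le> r"
  shows "(\<Prod>j<length ns. Kf a (r - 1) (ns ! j)) =
    (\<Prod>i=1..split_index ns (int r - 1) - 1. pochhammer (a + real r) (ns ! (i - 1) + 1 - r)) /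
    (\<Prod>i=split_index ns (int r - 1)..length ns. pochhammer (a + 1 + real (ns ! (i - 1))) (r - 1 - ns ! (i - 1)))"
proof (cases "ns = []")
  case True
  have "split_index ns (int r - 1) = 1" unfolding split_index_def True
    by (rule Least_equality) auto
  then show ?thesis using True by simp
next
  case False
  then have r1: "r \<ge> 1" using len by (cases ns) auto
  define s where "s = split_index ns (int r - 1)"
  have sp: "1 \<le> s" "s \<le> length ns + 1"
    and sc: "\<And>i. i \<in> {1..length ns} \<Longrightarrow> (i < s \<longleftrightarrow> r - 1 \<le> ns ! (i - 1))"
    using split_index_prop[OF srt, of "int r - 1"] r1 unfolding s_def by auto
  have U: "{1..length ns} = {1..s-1} \<union> {s..length ns}" using sp by auto
  have D: "{1..s-1} \<inter> {s..length ns} = {}" by auto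
  have "(\<Prod>j<length ns. Kf a (r - 1) (ns ! j)) = (\<Prod>i=1..length ns. Kf a (r - 1) (ns ! (i - 1)))"
    by (rule prod_shift1[symmetric])
  also have "\<dots> = (\<Prod>i=1..s-1. Kf a (r - 1) (ns ! (i - 1))) * (\<Prod>i=s..length ns. Kf a (r - 1) (ns ! (i - 1)))"
    unfolding U by (rule prod.union_disjoint) (use D in auto)
  also have "(\<Prod>i=1..s-1. Kf a (r - 1) (ns ! (i - 1))) =
       (\<Prod>i=1..s-1. pochhammer (a + real r) (ns ! (i - 1) + 1 - r))"
  proof (rule prod.cong[OF refl])
    fix i assume i: "i \<in> {1..s-1}"
    then have "i < s" "i \<in> {1..length ns}" using sp by auto
    then have "r - 1 \<le> ns ! (i - 1)" using sc[of i] by blast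
    moreover have "a + 1 + real (r - 1) = a + real r" using r1 by (simp add: of_nat_diff)
    moreover have "ns ! (i - 1) - (r - 1) = ns ! (i - 1) + 1 - r" using r1 by simp
    ultimately show "Kf a (r - 1) (ns ! (i - 1)) = pochhammer (a + real r) (ns ! (i - 1) + 1 - r)"
      by (simp add: Kf_def)
  qed
  also have "(\<Prod>i=s..length ns. Kf a (r - 1) (ns ! (i - 1))) =
       (\<Prod>i=s..length ns. 1 / pochhammer (a + 1 + real (ns ! (i - 1))) (r - 1 - ns ! (i - 1)))"
  proof (rule prod.cong[OF refl])
    fix i assume i: "i \<in> {s..length ns}"
    then have "\<not> i < s" "i \<in> {1..length ns}" using sp by auto
    then have "\<not> r - 1 \<le> ns ! (i - 1)" using sc[of i] by blast
    then show "Kf a (r - 1) (ns ! (i - 1)) = 1 / pochhammer (a + 1 + real (ns ! (i - 1))) (r - 1 - ns ! (i - 1))"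
      by (simp add: Kf_def)
  qed
  also have "\<dots> = 1 / (\<Prod>i=s..length ns. pochhammer (a + 1 + real (ns ! (i - 1))) (r - 1 - ns ! (i - 1)))"
    by (simp add: prod_dividef)
  finally show ?thesis unfolding s_def by simp
qed

lemma nz_from_den:
  assumes srt: "sorted_wrt (>) ns" and len: "length ns \<le> r"
    and den: "(\<Prod>i=split_index ns (int r - 1)..length ns. pochhammer (a + 1 + real (ns ! (i - 1))) (r - 1 - ns ! (i - 1))) \<noteq> 0"
    and j: "j < length ns" and lt: "ns ! j < r - 1"
  shows "pochhammer (a + 1 + real (ns ! j)) (r - 1 - ns ! j) \<noteq> 0"
proof -
  have r1: "r \<ge> 1" using len j by auto
  define s where "s = split_index ns (int r - 1)"
  have sc: "\<And>i. i \<in> {1..length ns} \<Longrightarrow> (i < s \<longleftrightarrow> r - 1 \<le> ns ! (i - 1))"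
    using split_index_prop[OF srt, of "int r - 1"] r1 unfolding s_def by auto
  have "Suc j \<in> {s..length ns}" using sc[of "Suc j"] j lt by auto
  moreover have "\<forall>i\<in>{s..length ns}. pochhammer (a + 1 + real (ns ! (i - 1))) (r - 1 - ns ! (i - 1)) \<noteq> 0"
    using den unfolding s_def[symmetric] by (simp add: prod_zero_iff)
  ultimately show ?thesis by fastforce
qed

lemma entryA:
  assumes i: "i < r" and nz: "n < r - 1 \<Longrightarrow> pochhammer (a + 1 + real n) (r - 1 - n) \<noteq> 0"
  shows "(deriv ^^ i) (\<lambda>y. laguerre n a y) 0 =
     pochhammer (a + 1 + real i) (r - 1 - i) * (Kf a (r - 1) n / fact n) * pochhammer (- real n) i"
proof (cases "i \<le> n")
  case True
  have "(deriv ^^ i) (\<lambda>y. laguerre n a y) 0 = (-1) ^ i * laguerre (n - i) (a + of_nat i) 0"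
    using True by (simp add: iter_deriv_lagA)
  also have "laguerre (n - i) (a + of_nat i) 0 = pochhammer (a + 1 + real i) (n - i) / fact (n - i)"
    unfolding lag_at0 gbinomial_pochhammer' by (simp add: ac_simps)
  also have "pochhammer (a + 1 + real i) (n - i) = pochhammer (a + 1 + real i) (r - 1 - i) * Kf a (r - 1) n"
    by (rule Kf_A) (use True i nz in auto)
  finally show ?thesis using True by (simp add: poch_neg_nat field_simps)
next
  case False
  then show ?thesis by (simp add: iter_deriv_lagA poch_neg_nat)
qed

lemma entryB:
  assumes i: "i < r" and nz: "m < r - 1 \<Longrightarrow> pochhammer (a + 1 + real m) (r - 1 - m) \<noteq> 0"
  shows "(deriv ^^ i) (\<lambda>y. exp y * laguerre m a (- y)) 0 =
     pochhammer (a + 1 + real i) (r - 1 - i) * (Kf a (r - 1) m / fact m) * pochhammer (a + 1 + real m) i"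
proof -
  have "(deriv ^^ i) (\<lambda>y. exp y * laguerre m a (- y)) 0 = laguerre m (a + of_nat i) 0"
    by (simp add: iter_deriv_lagB)
  also have "\<dots> = pochhammer (a + 1 + real i) m / fact m"
    unfolding lag_at0 gbinomial_pochhammer' by (simp add: ac_simps)
  also have "pochhammer (a + 1 + real i) m =
     pochhammer (a + 1 + real i) (r - 1 - i) * Kf a (r - 1) m * pochhammer (a + 1 + real m) i"
    by (rule Kf_B) (use i nz in auto)
  finally show ?thesis by simp
qed

lemma prod_add_split: "(\<Prod>j<(p::nat)+q. f j) = (\<Prod>j<p. f j) * (\<Prod>j<q. (f (p + j) :: real))"
  by (induction q) (simp_all add: mult.assoc)

lemma P0_eq:
  assumes r: "r = length ns + length ms"
    and nzA: "\<And>j. j < length ns \<Longrightarrow> ns ! j < r - 1 \<Longrightarrow> pochhammer (a + 1 + real (ns ! j)) (r - 1 - ns ! j) \<noteq> 0"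
    and nzB: "\<And>j. j < length ms \<Longrightarrow> ms ! j < r - 1 \<Longrightarrow> pochhammer (a + 1 + real (ms ! j)) (r - 1 - ms ! j) \<noteq> 0"
  shows "laguerre_P a ns ms 0 =
    (\<Prod>i<r. pochhammer (a + 1 + real i) (r - 1 - i)) *
    (\<Prod>j<length ns. Kf a (r - 1) (ns ! j) / fact (ns ! j)) *
    (\<Prod>j<length ms. Kf a (r - 1) (ms ! j) / fact (ms ! j)) *
    vandermonde (map (\<lambda>n. - real n) ns @ map (\<lambda>m. a + 1 + real m) ms)"
proof -
  define p where "p = length ns"
  define fs where "fs = map (\<lambda>n y. laguerre n a y) ns @ map (\<lambda>m y. exp y * laguerre m a (- y)) ms"
  define xl where "xl = map (\<lambda>n. - real n) ns @ map (\<lambda>m. a + 1 + real m) ms"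
  define colf where "colf j = (if j < p then Kf a (r - 1) (ns ! j) / fact (ns ! j)
       else Kf a (r - 1) (ms ! (j - p)) / fact (ms ! (j - p)))" for j
  have lfs: "length fs = r" and lxl: "length xl = r" using r by (simp_all add: fs_def xl_def)
  have "laguerre_P a ns ms 0 = det (mat r r (\<lambda>(i,j). (deriv ^^ i) (fs ! j) 0))"
    unfolding laguerre_P_def wronskian_def fs_def[symmetric] lfs by simp
  also have "mat r r (\<lambda>(i,j). (deriv ^^ i) (fs ! j) 0) =
      mat r r (\<lambda>(i,j). pochhammer (a + 1 + real i) (r - 1 - i) * colf j * pochhammer (xl ! j) i)"
  proof (rule eq_matI)
    fix i j assume "i < dim_row (mat r r (\<lambda>(i,j). pochhammer (a + 1 + real i) (r - 1 - i) * colf j * pochhammer (xl ! j) i))"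
      "j < dim_col (mat r r (\<lambda>(i,j). pochhammer (a + 1 + real i) (r - 1 - i) * colf j * pochhammer (xl ! j) i))"
    then have i: "i < r" and j: "j < r" by auto
    show "mat r r (\<lambda>(i,j). (deriv ^^ i) (fs ! j) 0) $$ (i, j) =
      mat r r (\<lambda>(i,j). pochhammer (a + 1 + real i) (r - 1 - i) * colf j * pochhammer (xl ! j) i) $$ (i, j)"
    proof (cases "j < p")
      case True
      then have "fs ! j = (\<lambda>y. laguerre (ns ! j) a y)" "xl ! j = - real (ns ! j)"
        by (simp_all add: fs_def xl_def nth_append p_def)
      then show ?thesis using i j True entryA[OF i nzA[of j]] by (simp add: colf_def p_def)
    next
      case False
      then have jq: "j - p < length ms" using j r p_def by auto
      have "fs ! j = (\<lambda>y. exp y * laguerre (ms ! (j - p)) a (- y))" "xl ! j = a + 1 + real (ms ! (j - p))"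
        using False jq by (simp_all add: fs_def xl_def nth_append p_def)
      then show ?thesis using i j False entryB[OF i nzB[OF jq]] by (simp add: colf_def)
    qed
  qed auto
  also have "det \<dots> = (\<Prod>i<r. pochhammer (a + 1 + real i) (r - 1 - i)) * (\<Prod>j<r. colf j) *
       det (mat r r (\<lambda>(i,j). pochhammer (xl ! j) i))"
    by (rule det_scale)
  also have "det (mat r r (\<lambda>(i,j). pochhammer (xl ! j) i)) = vandermonde xl"
    using vandermonde_det[of xl] lxl by simp
  also have "(\<Prod>j<r. colf j) = (\<Prod>j<length ns. Kf a (r - 1) (ns ! j) / fact (ns ! j)) *
    (\<Prod>j<length ms. Kf a (r - 1) (ms ! j) / fact (ms ! j))"
    unfolding r prod_add_split by (simp add: colf_def p_def r[symmetric])
  finally show ?thesis by (simp add: xl_def mult.assoc)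
qed

lemma vdm_rev_prefix:
  "vandermonde (rev xs @ ys) = vandermonde (xs @ ys) \<or> vandermonde (rev xs @ ys) = - vandermonde (xs @ ys)"
proof -
  define n where "n = length xs + length ys"
  define l where "l = xs @ ys"
  define l' where "l' = rev xs @ ys"
  define \<pi> where "\<pi> j = (if j < length xs then length xs - 1 - j else j)" for j
  have perm: "\<pi> permutes {0..<n}"
  proof (rule bij_imp_permutes)
    show "bij_betw \<pi> {0..<n} {0..<n}"
      by (rule bij_betw_byWitness[where f'=\<pi>]) (auto simp: \<pi>_def n_def)
  next
    fix x assume "x \<notin> {0..<n}" then show "\<pi> x = x" by (auto simp: \<pi>_def n_def)
  qed
  have nth: "j < n \<Longrightarrow> l' ! j = l ! (\<pi> j)" for j
    by (auto simp: l_def l'_def \<pi>_def nth_append rev_nth n_def)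
  have pin: "j < n \<Longrightarrow> \<pi> j < n" for j using permutes_in_image[OF perm, of j] by auto
  define T where "T = mat n n (\<lambda>(j,i). pochhammer (l ! j) i)"
  have "vandermonde l' = det (mat n n (\<lambda>(i,j). pochhammer (l' ! j) i))"
    using vandermonde_det[of l'] by (simp add: l'_def n_def)
  also have "\<dots> = det (transpose_mat (mat n n (\<lambda>(i,j). pochhammer (l' ! j) i)))"
    by (rule det_transpose[symmetric, where n=n]) simp
  also have "transpose_mat (mat n n (\<lambda>(i,j). pochhammer (l' ! j) i)) = mat n n (\<lambda>(j,i). T $$ (\<pi> j, i))"
    by (rule eq_matI) (auto simp: T_def nth pin)
  also have "det \<dots> = signof \<pi> * det T"
    by (rule det_permute_rows[OF _ perm]) (simp add: T_def)
  also have "T = transpose_mat (mat n n (\<lambda>(i,j). pochhammer (l ! j) i))"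
    by (rule eq_matI) (auto simp: T_def)
  also have "det \<dots> = det (mat n n (\<lambda>(i,j). pochhammer (l ! j) i))"
    by (rule det_transpose[where n=n]) simp
  also have "\<dots> = vandermonde l"
    using vandermonde_det[of l] by (simp add: l_def n_def)
  finally show ?thesis unfolding l_def l'_def by (auto simp: sign_def)
qed

lemma prod_shift1': "(\<Prod>k = 1..(r::nat). h k) = (\<Prod>i<r. (h (Suc i) :: real))"
proof -
  have "(\<Prod>k = 1..r. h k) = (\<Prod>k = 1..r. h (Suc (k - 1)))" by (rule prod.cong) auto
  also have "\<dots> = (\<Prod>i<r. h (Suc i))" by (rule prod_shift1)
  finally show ?thesis .
qed

lemma partP:
  assumes srtn: "sorted_wrt (>) ns" and srtm: "sorted_wrt (>) ms"
    and r: "r = length ns + length ms"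
    and den: "(\<Prod>i=split_index ns (int r - 1)..length ns. pochhammer (a + 1 + real (ns ! (i - 1))) (r - 1 - ns ! (i - 1)))
             * (\<Prod>j=split_index ms (int r - 1)..length ms. pochhammer (a + 1 + real (ms ! (j - 1))) (r - 1 - ms ! (j - 1)))
             * (\<Prod>i=1..length ns. fact (ns ! (i - 1)))
             * (\<Prod>j=1..length ms. fact (ms ! (j - 1))) \<noteq> 0" (is "?D1 * ?D2 * ?F1 * ?F2 \<noteq> 0")
  shows "laguerre_P a ns ms 0 = (
             (\<Prod>k=1..r. pochhammer (a + real k) (r - k))
             * (\<Prod>i=1..split_index ns (int r - 1)-1. pochhammer (a + real r) (ns ! (i - 1) + 1 - r))
             * (\<Prod>j=1..split_index ms (int r - 1)-1. pochhammer (a + real r) (ms ! (j - 1) + 1 - r))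
             * vandermonde (map (\<lambda>n. - real n) (rev ns) @ map (\<lambda>m. a + 1 + real m) ms)) /
             (?D1 * ?D2 * ?F1 * ?F2)
       \<or> laguerre_P a ns ms 0 = - ((
             (\<Prod>k=1..r. pochhammer (a + real k) (r - k))
             * (\<Prod>i=1..split_index ns (int r - 1)-1. pochhammer (a + real r) (ns ! (i - 1) + 1 - r))
             * (\<Prod>j=1..split_index ms (int r - 1)-1. pochhammer (a + real r) (ms ! (j - 1) + 1 - r))
             * vandermonde (map (\<lambda>n. - real n) (rev ns) @ map (\<lambda>m. a + 1 + real m) ms)) /
             (?D1 * ?D2 * ?F1 * ?F2))"
proof -
  let ?N1 = "\<Prod>i=1..split_index ns (int r - 1)-1. pochhammer (a + real r) (ns ! (i - 1) + 1 - r)"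
  let ?N2 = "\<Prod>j=1..split_index ms (int r - 1)-1. pochhammer (a + real r) (ms ! (j - 1) + 1 - r)"
  let ?Rw = "\<Prod>k=1..r. pochhammer (a + real k) (r - k)"
  have D1: "?D1 \<noteq> 0" and D2: "?D2 \<noteq> 0" and F1: "?F1 \<noteq> 0" and F2: "?F2 \<noteq> 0" using den by auto
  have lenn: "length ns \<le> r" and lenm: "length ms \<le> r" using r by auto
  have P: "laguerre_P a ns ms 0 =
    (\<Prod>i<r. pochhammer (a + 1 + real i) (r - 1 - i)) *
    (\<Prod>j<length ns. Kf a (r - 1) (ns ! j) / fact (ns ! j)) *
    (\<Prod>j<length ms. Kf a (r - 1) (ms ! j) / fact (ms ! j)) *
    vandermonde (map (\<lambda>n. - real n) ns @ map (\<lambda>m. a + 1 + real m) ms)"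
    by (rule P0_eq[OF r nz_from_den[OF srtn lenn D1] nz_from_den[OF srtm lenm D2]])
  have Rw: "(\<Prod>i<r. pochhammer (a + 1 + real i) (r - 1 - i)) = ?Rw"
    unfolding prod_shift1' by (simp add: ac_simps)
  have CA: "(\<Prod>j<length ns. Kf a (r - 1) (ns ! j) / fact (ns ! j)) = ?N1 / ?D1 / ?F1"
    unfolding prod_dividef prod_Kf_split[OF srtn lenn] prod_shift1[of "\<lambda>j. fact (ns ! j)", symmetric] by simp
  have CB: "(\<Prod>j<length ms. Kf a (r - 1) (ms ! j) / fact (ms ! j)) = ?N2 / ?D2 / ?F2"
    unfolding prod_dividef prod_Kf_split[OF srtm lenm] prod_shift1[of "\<lambda>j. fact (ms ! j)", symmetric] by simp
  have V: "vandermonde (map (\<lambda>n. - real n) (rev ns) @ map (\<lambda>m. a + 1 + real m) ms) =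
             vandermonde (map (\<lambda>n. - real n) ns @ map (\<lambda>m. a + 1 + real m) ms) \<or>
           vandermonde (map (\<lambda>n. - real n) (rev ns) @ map (\<lambda>m. a + 1 + real m) ms) =
             - vandermonde (map (\<lambda>n. - real n) ns @ map (\<lambda>m. a + 1 + real m) ms)"
    using vdm_rev_prefix[of "map (\<lambda>n. - real n) ns"] by (simp add: rev_map)
  show ?thesis
    using V unfolding P Rw CA CB using D1 D2 F1 F2
    by (elim disjE) (simp_all add: field_simps)
qed

lemma leib_sum:
  fixes G F :: "nat \<Rightarrow> real"
  shows "(\<Sum>k\<le>i. of_nat (i choose k) * (G (Suc (i - k)) * F k + G (i - k) * F (Suc k))) =
         (\<Sum>k\<le>Suc i. of_nat (Suc i choose k) * G (Suc i - k) * F k)"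
proof -
  have A: "(\<Sum>k\<le>i. of_nat (i choose k) * (G (Suc (i - k)) * F k)) =
        G (Suc i) * F 0 + (\<Sum>k\<le>i. of_nat (i choose Suc k) * G (i - k) * F (Suc k))"
  proof -
    have "(\<Sum>k\<le>i. of_nat (i choose k) * (G (Suc (i - k)) * F k)) =
          (\<Sum>k\<le>Suc i. of_nat (i choose k) * (G (Suc (i - k)) * F k))"
      by simp
    also have "\<dots> = G (Suc i) * F 0 + (\<Sum>k\<le>i. of_nat (i choose Suc k) * (G (Suc (i - Suc k)) * F (Suc k)))"
      by (subst sum.atMost_Suc_shift) simp
    also have "(\<Sum>k\<le>i. of_nat (i choose Suc k) * (G (Suc (i - Suc k)) * F (Suc k))) =
               (\<Sum>k\<le>i. of_nat (i choose Suc k) * G (i - k) * F (Suc k))"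
    proof (rule sum.cong[OF refl])
      fix k assume "k \<in> {..i}"
      then show "of_nat (i choose Suc k) * (G (Suc (i - Suc k)) * F (Suc k)) =
                 of_nat (i choose Suc k) * G (i - k) * F (Suc k)"
        by (cases "k = i") (auto simp: Suc_diff_Suc)
    qed
    finally show ?thesis .
  qed
  have B: "(\<Sum>k\<le>Suc i. of_nat (Suc i choose k) * G (Suc i - k) * F k) =
     G (Suc i) * F 0 + (\<Sum>k\<le>i. of_nat (i choose k) * G (i - k) * F (Suc k))
       + (\<Sum>k\<le>i. of_nat (i choose Suc k) * G (i - k) * F (Suc k))"
    by (subst sum.atMost_Suc_shift) (simp add: sum.distrib algebra_simps)
  show ?thesis
    unfolding B distrib_left sum.distrib A by (simp add: algebra_simps)
qed

lemma leibniz: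
  fixes G F :: "nat \<Rightarrow> real \<Rightarrow> real"
  assumes S: "open S"
    and dG: "\<And>k y. y \<in> S \<Longrightarrow> (G k has_real_derivative G (Suc k) y) (at y)"
    and dF: "\<And>k y. y \<in> S \<Longrightarrow> (F k has_real_derivative F (Suc k) y) (at y)"
    and y: "y \<in> S"
  shows "(deriv ^^ i) (\<lambda>y. G 0 y * F 0 y) y = (\<Sum>k\<le>i. of_nat (i choose k) * G (i - k) y * F k y)"
  using y
proof (induction i arbitrary: y)
  case 0
  then show ?case by simp
next
  case (Suc i)
  have d: "((\<lambda>y. \<Sum>k\<le>i. of_nat (i choose k) * G (i - k) y * F k y) has_real_derivative
        (\<Sum>k\<le>i. of_nat (i choose k) * (G (Suc (i - k)) y * F k y + G (i - k) y * F (Suc k) y))) (at y)"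
  proof (rule DERIV_sum)
    fix k
    show "((\<lambda>y. of_nat (i choose k) * G (i - k) y * F k y) has_real_derivative
        of_nat (i choose k) * (G (Suc (i - k)) y * F k y + G (i - k) y * F (Suc k) y)) (at y)"
      unfolding mult.assoc
      by (rule DERIV_cong[OF DERIV_cmult[OF DERIV_mult[OF dG[OF Suc.prems, of "i - k"] dF[OF Suc.prems, of k]]]])
         (simp add: algebra_simps)
  qed
  have d2: "((deriv ^^ i) (\<lambda>y. G 0 y * F 0 y) has_real_derivative
        (\<Sum>k\<le>i. of_nat (i choose k) * (G (Suc (i - k)) y * F k y + G (i - k) y * F (Suc k) y))) (at y)"
    by (rule has_field_derivative_transform_within_open[OF d S Suc.prems]) (simp add: Suc.IH)
  show ?case
    using DERIV_imp_deriv[OF d2] leib_sum[of i "\<lambda>k. G k y" "\<lambda>k. F k y"] by simp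
qed

definition smooth :: "(real \<Rightarrow> real) \<Rightarrow> bool" where
  "smooth f \<longleftrightarrow> (\<forall>k y. (deriv ^^ k) f differentiable (at y))"

lemma smooth_tower: "smooth f \<Longrightarrow> ((deriv ^^ k) f has_real_derivative (deriv ^^ Suc k) f y) (at y)"
  by (simp add: smooth_def DERIV_deriv_iff_real_differentiable)

definition Gp :: "real \<Rightarrow> nat \<Rightarrow> real \<Rightarrow> real" where
  "Gp c k y = (-1) ^ k * pochhammer (- c) k * y powr (c - real k)"

lemma Gp_tower: "y > 0 \<Longrightarrow> (Gp c k has_real_derivative Gp c (Suc k) y) (at y)"
proof -
  assume y: "y > 0"
  have "((\<lambda>y. (-1) ^ k * pochhammer (- c) k * y powr (c - real k)) has_real_derivative
        (-1) ^ k * pochhammer (- c) k * ((c - real k) * y powr (c - real k - 1))) (at y)"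
    by (rule DERIV_cmult[OF has_real_derivative_powr[OF y]])
  moreover have "(-1) ^ k * pochhammer (- c) k * ((c - real k) * y powr (c - real k - 1)) = Gp c (Suc k) y"
    by (simp add: Gp_def pochhammer_rec' algebra_simps diff_diff_eq)
  ultimately show ?thesis unfolding Gp_def[abs_def] by simp
qed

lemma wr_entry:
  assumes sm: "smooth f" and x: "x > 0"
  shows "(deriv ^^ i) (\<lambda>y. y powr c * f y) x = (\<Sum>k\<le>i. of_nat (i choose k) * Gp c (i - k) x * (deriv ^^ k) f x)"
proof -
  have e: "(\<lambda>y. y powr c * f y) = (\<lambda>y. Gp c 0 y * (deriv ^^ 0) f y)" by (simp add: Gp_def fun_eq_iff)
  show ?thesis unfolding e
  proof (rule leibniz[where S="{0<..}"])
    fix k y show "((deriv ^^ k) f has_real_derivative (deriv ^^ Suc k) f y) (at y)"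
      by (rule smooth_tower[OF sm])
  qed (auto intro: Gp_tower simp: x)
qed

lemma wr_scale:
  assumes sm: "\<forall>f\<in>set fs. smooth f" and x: "x > 0"
  shows "wronskian (map (\<lambda>f y. y powr c * f y) fs) x = (x powr c) ^ length fs * wronskian fs x"
proof -
  define n where "n = length fs"
  define T :: "real mat" where "T = mat n n (\<lambda>(i,k). if k \<le> i then of_nat (i choose k) * Gp c (i - k) x else 0)"
  define Wf where "Wf = mat n n (\<lambda>(i,j). (deriv ^^ i) (fs ! j) x)"
  have "mat n n (\<lambda>(i,j). (deriv ^^ i) (map (\<lambda>f y. y powr c * f y) fs ! j) x) = T * Wf"
  proof (rule eq_matI)
    fix i j assume "i < dim_row (T * Wf)" "j < dim_col (T * Wf)"
    then have i: "i < n" and j: "j < n" by (auto simp: T_def Wf_def)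
    have "(T * Wf) $$ (i, j) = (\<Sum>k<n. (if k \<le> i then of_nat (i choose k) * Gp c (i - k) x else 0) * (deriv ^^ k) (fs ! j) x)"
      using i j by (simp add: T_def Wf_def scalar_prod_def atLeast0LessThan)
    also have "\<dots> = (\<Sum>k<n. if k \<le> i then of_nat (i choose k) * Gp c (i - k) x * (deriv ^^ k) (fs ! j) x else 0)"
      by (intro sum.cong) auto
    also have "\<dots> = (\<Sum>k\<in>{..<n} \<inter> {k. k \<le> i}. of_nat (i choose k) * Gp c (i - k) x * (deriv ^^ k) (fs ! j) x)"
      by (simp add: sum.If_cases)
    also have "{..<n} \<inter> {k. k \<le> i} = {..i}" using i by auto
    also have "(\<Sum>k\<le>i. of_nat (i choose k) * Gp c (i - k) x * (deriv ^^ k) (fs ! j) x) =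
       (deriv ^^ i) (\<lambda>y. y powr c * (fs ! j) y) x"
      using wr_entry[OF _ x] sm j by (simp add: n_def)
    finally show "mat n n (\<lambda>(i,j). (deriv ^^ i) (map (\<lambda>f y. y powr c * f y) fs ! j) x) $$ (i, j) = (T * Wf) $$ (i, j)"
      using i j by (simp add: n_def)
  qed (auto simp: T_def Wf_def)
  then have "wronskian (map (\<lambda>f y. y powr c * f y) fs) x = det (T * Wf)"
    by (simp add: wronskian_def n_def)
  also have "\<dots> = det T * det Wf"
    by (rule det_mult[where n=n]) (auto simp: T_def Wf_def)
  also have "det T = (x powr c) ^ n"
  proof -
    have "det T = prod_list (diag_mat T)"
      by (rule det_lower_triangular[where n=n]) (auto simp: T_def)
    also have "diag_mat T = map (\<lambda>i. x powr c) [0..<n]"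
      unfolding diag_mat_def by (intro map_cong) (auto simp: T_def Gp_def simp del: upt_Suc)
    finally show ?thesis by (simp add: map_replicate_const del: upt_Suc)
  qed
  finally show ?thesis by (simp add: wronskian_def Wf_def n_def)
qed

lemma lag_diff: "laguerre m g differentiable (at y)"
proof (cases m)
  case 0
  have "laguerre m g = (\<lambda>_. 1)" using 0 by (simp add: fun_eq_iff lag0)
  then show ?thesis by simp
next
  case (Suc m0)
  then show ?thesis using lag_deriv[of m0 g y] by (auto simp: real_differentiable_def)
qed

lemma smooth_lagA: "smooth (\<lambda>y. laguerre n b y)"
  unfolding smooth_def iter_deriv_lagA
proof (intro allI)
  fix k y
  show "(\<lambda>y. if k \<le> n then (-1) ^ k * laguerre (n - k) (b + of_nat k) y else 0) differentiable (at y)"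
  proof (cases "k \<le> n")
    case True
    obtain D where "(laguerre (n - k) (b + of_nat k) has_real_derivative D) (at y)"
      using lag_diff real_differentiableE by blast
    from DERIV_cmult[OF this, of "(-1)^k"] show ?thesis using True
      by (auto simp: real_differentiable_def)
  next
    case False then show ?thesis by simp
  qed
qed

lemma smooth_lagB: "smooth (\<lambda>y. exp y * laguerre m b (- y))"
  unfolding smooth_def iter_deriv_lagB using lagB_deriv by (auto simp: real_differentiable_def)

lemma wr_cont:
  assumes sm: "\<forall>f\<in>set fs. smooth f"
  shows "isCont (wronskian fs) x0"
proof -
  define n where "n = length fs"
  have eq: "wronskian fs = (\<lambda>x. \<Sum>p\<in>{p. p permutes {0..<n}}. signof p * (\<Prod>i\<in>{0..<n}. (deriv ^^ i) (fs ! (p i)) x))"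
  proof (rule ext)
    fix x
    have c: "mat n n (\<lambda>(i,j). (deriv ^^ i) (fs ! j) x) \<in> carrier_mat n n" by simp
    show "wronskian fs x = (\<Sum>p\<in>{p. p permutes {0..<n}}. signof p * (\<Prod>i\<in>{0..<n}. (deriv ^^ i) (fs ! (p i)) x))"
      unfolding wronskian_def n_def[symmetric] det_def'[OF c]
    proof (intro sum.cong refl arg_cong[where f="\<lambda>t. signof _ * t"] prod.cong)
      fix p i assume p: "p \<in> {p. p permutes {0..<n}}" and i: "i \<in> {0..<n}"
      then have "p i < n" using permutes_in_image[of p "{0..<n}" i] by auto
      then show "mat n n (\<lambda>(i,j). (deriv ^^ i) (fs ! j) x) $$ (i, p i) = (deriv ^^ i) (fs ! (p i)) x"
        using i by simp
    qed
  qed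
  have cont: "isCont ((deriv ^^ i) (fs ! j)) x0" if "j < n" for i j
  proof -
    have "smooth (fs ! j)" using sm that by (simp add: n_def)
    then have "((deriv ^^ i) (fs ! j) has_real_derivative (deriv ^^ Suc i) (fs ! j) x0) (at x0)"
      by (rule smooth_tower)
    then show ?thesis by (rule DERIV_isCont)
  qed
  show ?thesis unfolding eq
  proof (intro continuous_intros)
    fix p i assume p: "p \<in> {p. p permutes {0..<n}}" and i: "i \<in> {0..<n}"
    then have "p i < n" using permutes_in_image[of p "{0..<n}" i] by auto
    then show "isCont ((deriv ^^ i) (fs ! (p i))) x0" by (rule cont)
  qed
qed

lemma Q_eq_P:
  assumes x: "x > 0"
  shows "laguerre_Q a ns ms x = laguerre_P (- a) ms ns x"
proof -
  define fs where "fs = map (\<lambda>n y. laguerre n (- a) y) ms @ map (\<lambda>m y. exp y * laguerre m (- a) (- y)) ns"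
  have sm: "\<forall>f\<in>set fs. smooth f" by (auto simp: fs_def smooth_lagA smooth_lagB)
  have gs: "map (\<lambda>m y. y powr (- a) * laguerre m (- a) y) ms @
                map (\<lambda>n y. exp y * y powr (- a) * laguerre n (- a) (- y)) ns =
            map (\<lambda>f y. y powr (- a) * f y) fs"
    by (simp add: fs_def fun_eq_iff mult.commute mult.left_commute)
  have lfs: "length fs = length ns + length ms" by (simp add: fs_def)
  have pw: "x powr (a * real (length ns + length ms)) * (x powr (- a)) ^ (length ns + length ms) = 1"
    using x by (simp add: powr_power powr_add[symmetric])
  have "laguerre_Q a ns ms x = exp (- real (length ns) * x) *
      (x powr (a * real (length ns + length ms)) * (x powr (- a)) ^ (length ns + length ms)) * wronskian fs x"
    unfolding laguerre_Q_def gs wr_scale[OF sm x] lfs by (simp add: mult.assoc)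
  also have "\<dots> = laguerre_P (- a) ms ns x"
    unfolding pw by (simp add: laguerre_P_def fs_def)
  finally show ?thesis .
qed

lemma Q_lim: "(laguerre_Q a ns ms \<longlongrightarrow> laguerre_P (- a) ms ns 0) (at_right 0)"
proof -
  define fs where "fs = map (\<lambda>n y. laguerre n (- a) y) ms @ map (\<lambda>m y. exp y * laguerre m (- a) (- y)) ns"
  have sm: "\<forall>f\<in>set fs. smooth f" by (auto simp: fs_def smooth_lagA smooth_lagB)
  have "isCont (laguerre_P (- a) ms ns) 0"
    unfolding laguerre_P_def[abs_def] fs_def[symmetric]
    by (intro continuous_intros wr_cont[OF sm])
  then have "(laguerre_P (- a) ms ns \<longlongrightarrow> laguerre_P (- a) ms ns 0) (at_right 0)"
    by (simp add: isCont_def filterlim_at_split)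
  moreover have "eventually (\<lambda>x. laguerre_P (- a) ms ns x = laguerre_Q a ns ms x) (at_right 0)"
    using eventually_at_right_less[of 0] by eventually_elim (simp add: Q_eq_P)
  ultimately show ?thesis by (rule Lim_transform_eventually)
qed

theorem corollary6p3:
  fixes \<alpha> :: real and ns ms ns' ms' :: "nat list"
  assumes "sorted_wrt (>) ns" and "sorted_wrt (>) ms"
    and "sorted_wrt (>) ns'" and "sorted_wrt (>) ms'"
  shows
  "((let p = length ns; q = length ms; r = p + q;
         s = split_index ns (int r - 1); s' = split_index ms (int r - 1);
         num = (\<Prod>k=1..r. pochhammer (\<alpha> + real k) (r - k))
             * (\<Prod>i=1..s-1. pochhammer (\<alpha> + real r) (ns ! (i - 1) + 1 - r))
             * (\<Prod>j=1..s'-1. pochhammer (\<alpha> + real r) (ms ! (j - 1) + 1 - r))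
             * vandermonde (map (\<lambda>n. - real n) (rev ns) @ map (\<lambda>m. \<alpha> + 1 + real m) ms);
         den = (\<Prod>i=s..p. pochhammer (\<alpha> + 1 + real (ns ! (i - 1))) (r - 1 - ns ! (i - 1)))
             * (\<Prod>j=s'..q. pochhammer (\<alpha> + 1 + real (ms ! (j - 1))) (r - 1 - ms ! (j - 1)))
             * (\<Prod>i=1..p. fact (ns ! (i - 1)))
             * (\<Prod>j=1..q. fact (ms ! (j - 1)))
     in den \<noteq> 0 \<longrightarrow> (laguerre_P \<alpha> ns ms 0 = num / den \<or> laguerre_P \<alpha> ns ms 0 = - (num / den))))
   \<and>
   (    (let p = length ns'; q = length ms'; r = p + q;
         s = split_index ns' (int r - 1); s' = split_index ms' (int r - 1);
         num = (\<Prod>k=1..r. pochhammer (- \<alpha> + real k) (r - k))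
             * (\<Prod>j=1..s'-1. pochhammer (- \<alpha> + real r) (ms' ! (j - 1) + 1 - r))
             * (\<Prod>i=1..s-1. pochhammer (- \<alpha> + real r) (ns' ! (i - 1) + 1 - r))
             * vandermonde (map (\<lambda>m. - real m) (rev ms') @ map (\<lambda>n. - \<alpha> + 1 + real n) ns');
         den = (\<Prod>j=s'..q. pochhammer (- \<alpha> + 1 + real (ms' ! (j - 1))) (r - 1 - ms' ! (j - 1)))
             * (\<Prod>i=s..p. pochhammer (- \<alpha> + 1 + real (ns' ! (i - 1))) (r - 1 - ns' ! (i - 1)))
             * (\<Prod>j=1..q. fact (ms' ! (j - 1)))
             * (\<Prod>i=1..p. fact (ns' ! (i - 1)))
     in den \<noteq> 0 \<longrightarrow> ((laguerre_Q \<alpha> ns' ms' \<longlongrightarrow> num / den) (at_right 0) \<or>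
                        (laguerre_Q \<alpha> ns' ms' \<longlongrightarrow> - (num / den)) (at_right 0))))"
    unfolding Let_def
  apply (intro conjI impI)
  subgoal premises den
    by (rule partP[OF assms(1,2) refl den])
  subgoal premises den
    using partP[OF assms(4) assms(3) add.commute den] Q_lim[of \<alpha> ns' ms'] by auto
  done

end
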